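(* Let $n\ge 2$, let $v_1,\dots,v_N\in S^{n-1}$ be unit vectors not contained in any closed hemisphere and in general position in dimension $n$, and let $(P_i)$ be a sequence of polytopes in $\mathcal P(v_1,\dots,v_N)$. If the outer radii $R_i$ of $P_i$ are not uniformly bounded and $q\ge 0$, then the chord integrals $I_q(P_i)$ are not bounded.
   Context: Unit vectors are in general position in dimension $n$ if any $n$ of them are linearly independent. $\mathcal P(v_1,\dots,v_N)$ is the set of polytopes in $\mathbb R^n$ with nonempty interior whose facet outer unit normals all belong to $\{v_1,\dots,v_N\}$. The outer radius of a convex body is the smallest radius of a ball containing it. For $q\ge 0$ and a convex body $K$, the chord integral is $I_q(K)=\int_{\mathscr L^n}|K\cap\ell|^q\,d\ell$, where $\mathscr L^n$ is the affine Grassmannian of lines in $\mathbb R^n$ with its Haar measure and $|K\cap\ell|$ is the length of the chord $K\cap\ell$. *)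

theory Defs
  imports "HOL-Analysis.Analysis"
begin

definition not_in_closed_hemisphere :: "nat \<Rightarrow> (nat \<Rightarrow> 'a::euclidean_space) \<Rightarrow> bool" where
  "not_in_closed_hemisphere N v \<longleftrightarrow>
     \<not> (\<exists>u. norm u = 1 \<and> (\<forall>i\<in>{1..N}. v i \<bullet> u \<ge> 0))"

definition general_position :: "nat \<Rightarrow> (nat \<Rightarrow> 'a::euclidean_space) \<Rightarrow> bool" where
  "general_position N v \<longleftrightarrow>
     (\<forall>I. I \<subseteq> {1..N} \<and> card I = DIM('a) \<longrightarrow> inj_on v I \<and> independent (v ` I))"

definition polytope_class :: "nat \<Rightarrow> (nat \<Rightarrow> 'a::euclidean_space) \<Rightarrow> 'a set set" where
  "polytope_class N v = {P. polytope P \<and> interior P \<noteq> {} \<and>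
     (\<forall>F. F facet_of P \<longrightarrow>
        (\<exists>i\<in>{1..N}. \<exists>b. P \<subseteq> {x. v i \<bullet> x \<le> b} \<and> F = P \<inter> {x. v i \<bullet> x = b}))}"

definition outer_radius :: "'a::euclidean_space set \<Rightarrow> real" where
  "outer_radius K = Inf {r. \<exists>c. K \<subseteq> cball c r}"

definition chord_length :: "'a::euclidean_space set \<Rightarrow> 'a \<Rightarrow> 'a \<Rightarrow> real" where
  "chord_length K x u = measure lborel {t::real. x + t *\<^sub>R u \<in> K}"

text \<open>The Haar measure on lines is realised (up to a positive constant
  factor) as: direction u in S^{n-1} with the (cone) surface measure,
  u = w/|w| for w uniform in the unit ball, and base point y in u-perp with
  (n-1)-dimensional Lebesgue measure, realised as the Lebesgue measure of the slab
  {x. 0 \<le> x\<bullet>u \<le> 1} (the line x + R u only depends on the projection of x to u-perp).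
  The convention 0 powr q = 0 means lines missing K contribute 0 (also for q = 0).\<close>
definition chord_integral :: "real \<Rightarrow> 'a::euclidean_space set \<Rightarrow> ennreal" where
  "chord_integral q K =
     (\<integral>\<^sup>+ w. indicator (ball 0 1) w *
        (\<integral>\<^sup>+ x. indicator {x. 0 \<le> x \<bullet> sgn w \<and> x \<bullet> sgn w \<le> 1} x *
                ennreal (chord_length K x (sgn w) powr q) \<partial>lborel) \<partial>lborel)"

end

theory Submission
  imports Defs
begin

lemma card_V_ge:
  fixes v :: "nat \<Rightarrow> 'a::euclidean_space"
  assumes "not_in_closed_hemisphere N v"
  shows "DIM('a) \<le> card (v ` {1..N})"
proof (rule ccontr)
  let ?V = "v ` {1..N}"
  assume "\<not> ?thesis"
  then have "card ?V < DIM('a)" by simp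
  moreover have "dim (span ?V) \<le> card ?V"
    by (simp add: dim_le_card' dim_span)
  ultimately have "span ?V \<noteq> UNIV" by (metis dim_UNIV not_le order_refl)
  then obtain a :: 'a where a: "a \<noteq> 0" "\<forall>x\<in>span ?V. a \<bullet> x = 0"
    using span_not_UNIV_orthogonal by blast
  let ?u = "sgn a"
  have "norm ?u = 1" using a by (simp add: norm_sgn)
  moreover have "\<forall>i\<in>{1..N}. v i \<bullet> ?u \<ge> 0"
  proof
    fix i assume "i \<in> {1..N}"
    then have "v i \<in> span ?V" by (simp add: span_base)
    then have "a \<bullet> v i = 0" using a by blast
    then show "v i \<bullet> ?u \<ge> 0" by (simp add: sgn_div_norm inner_commute)
  qed
  ultimately show False using assms unfolding not_in_closed_hemisphere_def by blast
qed

lemma gp_indep: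
  fixes v :: "nat \<Rightarrow> 'a::euclidean_space"
  assumes hem: "not_in_closed_hemisphere N v" and gp: "general_position N v"
    and T: "T \<subseteq> v ` {1..N}" "card T \<le> DIM('a)"
  shows "independent T"
proof -
  let ?V = "v ` {1..N}"
  have fT: "finite T" using T(1) finite_subset by blast
  have "card (?V - T) = card ?V - card T" using T(1) fT by (simp add: card_Diff_subset)
  then have "DIM('a) - card T \<le> card (?V - T)" using card_V_ge[OF hem] by linarith
  then obtain R where R: "R \<subseteq> ?V - T" "card R = DIM('a) - card T" "finite R"
    by (meson obtain_subset_with_card_n)
  define T2 where "T2 = T \<union> R"
  have cT2: "card T2 = DIM('a)" unfolding T2_def using R fT T
    by (subst card_Un_disjoint) auto
  have T2V: "T2 \<subseteq> ?V" using R T unfolding T2_def by auto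
  define J where "J = inv_into {1..N} v ` T2"
  have J1: "J \<subseteq> {1..N}" unfolding J_def using T2V by (auto intro: inv_into_into)
  have J2: "v ` J = T2" unfolding J_def by (rule image_inv_into_cancel[OF refl T2V])
  have "inj_on (inv_into {1..N} v) T2" using T2V by (metis inj_on_inv_into)
  then have "card J = DIM('a)" unfolding J_def using cT2 by (simp add: card_image)
  then have "independent (v ` J)" using gp J1 unfolding general_position_def by blast
  then show ?thesis using J2 T2_def independent_mono by blast
qed

lemma pos_lemma:
  fixes v :: "nat \<Rightarrow> 'a::euclidean_space"
  assumes hem: "not_in_closed_hemisphere N v" and gp: "general_position N v"
    and S: "S \<subseteq> v ` {1..N}" and h0: "0 \<in> convex hull S"
    and d: "d \<noteq> 0"
  shows "\<exists>a\<in>S. a \<bullet> d > 0"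
proof (rule ccontr)
  assume "\<not> ?thesis"
  then have le: "\<forall>a\<in>S. a \<bullet> d \<le> 0" by auto
  have fS: "finite S" using S finite_subset by blast
  obtain u where u: "\<forall>x\<in>S. 0 \<le> u x" "sum u S = 1" "(\<Sum>x\<in>S. u x *\<^sub>R x) = 0"
    using h0[unfolded convex_hull_finite[OF fS]] by blast
  have "(\<Sum>x\<in>S. u x * (x \<bullet> d)) = (\<Sum>x\<in>S. u x *\<^sub>R x) \<bullet> d"
    by (simp add: inner_sum_left)
  also have "\<dots> = 0" using u by simp
  finally have s0: "(\<Sum>x\<in>S. u x * (x \<bullet> d)) = 0" .
  have np: "\<forall>x\<in>S. u x * (x \<bullet> d) \<le> 0" using u le by (simp add: mult_nonneg_nonpos)
  have z: "\<forall>x\<in>S. u x * (x \<bullet> d) = 0"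
  proof -
    have "(\<Sum>x\<in>S. - (u x * (x \<bullet> d))) = 0" using s0 by (simp add: sum_negf)
    moreover have "\<forall>x\<in>S. 0 \<le> - (u x * (x \<bullet> d))" using np by auto
    ultimately have "\<forall>x\<in>S. - (u x * (x \<bullet> d)) = 0"
      using sum_nonneg_eq_0_iff[OF fS, of "\<lambda>x. - (u x * (x \<bullet> d))"] by simp
    then show ?thesis by simp
  qed
  define T where "T = {x\<in>S. u x \<noteq> 0}"
  have fT: "finite T" using fS T_def by simp
  have TS: "T \<subseteq> S" by (auto simp: T_def)
  have Td: "T \<subseteq> {x. d \<bullet> x = 0}" using z by (auto simp: T_def inner_commute)
  have sumT: "(\<Sum>x\<in>T. u x *\<^sub>R x) = 0"
  proof -
    have "(\<Sum>x\<in>T. u x *\<^sub>R x) = (\<Sum>x\<in>S. u x *\<^sub>R x)"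
      by (rule sum.mono_neutral_left[OF fS TS]) (auto simp: T_def)
    then show ?thesis using u by simp
  qed
  have "T \<noteq> {}"
  proof
    assume "T = {}"
    then have "\<forall>x\<in>S. u x = 0" by (auto simp: T_def)
    then have "sum u S = 0" by simp
    then show False using u by simp
  qed
  then obtain t where "t \<in> T" by blast
  then have "u t \<noteq> 0" by (simp add: T_def)
  then have dep: "dependent T"
    using sumT \<open>t \<in> T\<close> unfolding real_vector.dependent_finite[OF fT]
    by blast
  obtain T' where T': "T' \<subseteq> T" "card T' = min (card T) DIM('a)" "finite T'"
    by (metis min.cobounded1 obtain_subset_with_card_n)
  have iT': "independent T'"
    using gp_indep[OF hem gp, of T'] T' TS S by auto
  have "card T' \<le> dim {x. d \<bullet> x = 0}"
    using independent_card_le_dim[OF _ iT'] T' Td by blast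
  also have "\<dots> = DIM('a) - 1" using d by (simp add: dim_hyperplane)
  finally have "card T' < DIM('a)" using DIM_positive[where 'a='a] by linarith
  then have "card T' = card T" using T' by linarith
  then have "T' = T" using T' fT card_subset_eq by blast
  then show False using dep iT' by simp
qed

lemma pos_const:
  fixes S :: "'a::euclidean_space set"
  assumes fS: "finite S" and pos: "\<forall>d. d \<noteq> 0 \<longrightarrow> (\<exists>a\<in>S. a \<bullet> d > 0)"
  shows "\<exists>\<mu>>0. \<forall>d. \<exists>a\<in>S. a \<bullet> d \<ge> \<mu> * norm d"
proof -
  obtain b :: 'a where b: "b \<in> Basis" using nonempty_Basis by blast
  then have "b \<noteq> 0" by auto
  then have Sne: "S \<noteq> {}" using pos by blast
  define f where "f d = (\<Sum>a\<in>S. max 0 (a \<bullet> d))" for d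
  have cont: "continuous_on (sphere 0 1) f" unfolding f_def
    by (intro continuous_intros)
  have "sphere (0::'a) 1 \<noteq> {}" by simp
  then obtain d0 where d0: "d0 \<in> sphere 0 1" "\<forall>d\<in>sphere 0 1. f d0 \<le> f d"
    using continuous_attains_inf[OF compact_sphere _ cont] by blast
  have "d0 \<noteq> 0" using d0 by auto
  then obtain a0 where a0: "a0 \<in> S" "a0 \<bullet> d0 > 0" using pos by blast
  have m: "f d0 > 0" unfolding f_def
    by (rule sum_pos2[OF fS a0(1)]) (use a0 in auto)
  define \<mu> where "\<mu> = f d0 / card S"
  have cS: "card S > 0" using fS Sne by (simp add: card_gt_0_iff)
  have mu: "\<mu> > 0" unfolding \<mu>_def using m cS by simp
  have homog: "f (c *\<^sub>R x) = c * f x" if "c \<ge> 0" for c x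
    unfolding f_def sum_distrib_left
    by (rule sum.cong[OF refl]) (use that in \<open>simp add: max_mult_distrib_left\<close>)
  show ?thesis
  proof (intro exI[of _ \<mu>] conjI allI mu)
    fix d :: 'a
    show "\<exists>a\<in>S. \<mu> * norm d \<le> a \<bullet> d"
    proof (cases "d = 0")
      case True then show ?thesis using Sne by auto
    next
      case False
      let ?d' = "(1 / norm d) *\<^sub>R d"
      have "?d' \<in> sphere 0 1" using False by simp
      then have "f d0 \<le> f ?d'" using d0 by blast
      also have "f ?d' = f d / norm d" using homog[of "1/norm d" d] by simp
      finally have fd: "f d0 * norm d \<le> f d" using False by (simp add: field_simps)
      show ?thesis
      proof (rule ccontr)
        assume "\<not> ?thesis"
        then have lt: "\<forall>a\<in>S. a \<bullet> d < \<mu> * norm d" by auto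
        have pp: "\<mu> * norm d > 0" using mu False by simp
        have "f d < (\<Sum>a\<in>S. \<mu> * norm d)" unfolding f_def
          by (rule sum_strict_mono[OF fS Sne]) (use lt pp in auto)
        also have "\<dots> = f d0 * norm d" unfolding \<mu>_def using cS by simp
        finally show False using fd by simp
      qed
    qed
  qed
qed

lemma finite_uniform_const:
  assumes "finite X"
    and "\<forall>x\<in>X. \<exists>\<mu>>0. Q x (\<mu>::real)"
    and "\<And>x \<mu> \<mu>'. Q x \<mu> \<Longrightarrow> 0 < \<mu>' \<Longrightarrow> \<mu>' \<le> \<mu> \<Longrightarrow> Q x \<mu>'"
  shows "\<exists>\<mu>>0. \<forall>x\<in>X. Q x \<mu>"
  using assms(1,2)
proof (induction X rule: finite_induct)
  case empty then show ?case by (intro exI[of _ 1]) auto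
next
  case (insert x F)
  then obtain \<mu>1 where m1: "\<mu>1 > 0" "\<forall>y\<in>F. Q y \<mu>1" by auto
  obtain \<mu>2 where m2: "\<mu>2 > 0" "Q x \<mu>2" using insert by auto
  show ?case
    by (rule exI[of _ "min \<mu>1 \<mu>2"]) (use m1 m2 assms(3) in auto)
qed

lemma uniform_mu:
  fixes v :: "nat \<Rightarrow> 'a::euclidean_space"
  assumes hem: "not_in_closed_hemisphere N v" and gp: "general_position N v"
  shows "\<exists>\<mu>>0. \<forall>S. S \<subseteq> v ` {1..N} \<and> 0 \<in> convex hull S \<longrightarrow> (\<forall>d. \<exists>a\<in>S. a \<bullet> d \<ge> \<mu> * norm d)"
proof -
  let ?X = "{S. S \<subseteq> v ` {1..N} \<and> 0 \<in> convex hull S}"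
  have fX: "finite ?X" by (rule finite_subset[of _ "Pow (v ` {1..N})"]) auto
  have "\<exists>\<mu>>0. \<forall>S\<in>?X. \<forall>d. \<exists>a\<in>S. a \<bullet> d \<ge> \<mu> * norm d"
  proof (rule finite_uniform_const[OF fX])
    show "\<forall>S\<in>?X. \<exists>\<mu>>0. \<forall>d. \<exists>a\<in>S. a \<bullet> d \<ge> \<mu> * norm d"
    proof
      fix S assume S: "S \<in> ?X"
      then have fS: "finite S" using finite_subset by blast
      show "\<exists>\<mu>>0. \<forall>d. \<exists>a\<in>S. a \<bullet> d \<ge> \<mu> * norm d"
        by (rule pos_const[OF fS]) (use pos_lemma[OF hem gp] S in blast)
    qed
  next
    fix S \<mu> \<mu>'
    assume "\<forall>d. \<exists>a\<in>S. a \<bullet> d \<ge> \<mu> * norm d" "0 < (\<mu>'::real)" "\<mu>' \<le> \<mu>"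
    then show "\<forall>d. \<exists>a\<in>S. a \<bullet> d \<ge> \<mu>' * norm d"
      by (meson mult_right_mono norm_ge_zero order_trans)
  qed
  then show ?thesis by auto
qed

lemma polytope_repr:
  fixes v :: "nat \<Rightarrow> 'a::euclidean_space"
  assumes PC: "P \<in> polytope_class N v" and unit: "\<forall>i\<in>{1..N}. norm (v i) = 1"
  shows "\<exists>\<Phi>. finite \<Phi> \<and> fst ` \<Phi> \<subseteq> v ` {1..N} \<and> P = {x. \<forall>p\<in>\<Phi>. fst p \<bullet> x \<le> snd p}"
proof -
  have poly: "polytope P" and intP: "interior P \<noteq> {}"
    and fac: "\<forall>F. F facet_of P \<longrightarrow> (\<exists>i\<in>{1..N}. \<exists>b. P \<subseteq> {x. v i \<bullet> x \<le> b} \<and> F = P \<inter> {x. v i \<bullet> x = b})"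
    using PC unfolding polytope_class_def by auto
  have phd: "polyhedron P" using poly by (rule polytope_imp_polyhedron)
  have clP: "closed P" using poly by (rule polytope_imp_closed)
  have cvP: "convex P" using poly by (rule polytope_imp_convex)
  let ?Fs = "{F. F facet_of P}"
  have fFs: "finite ?Fs" using phd by (rule finite_polyhedron_facets)
  obtain a b where ab: "\<And>F. F facet_of P \<Longrightarrow> a F \<in> v ` {1..N} \<and> P \<subseteq> {x. a F \<bullet> x \<le> b F} \<and> F = P \<inter> {x. a F \<bullet> x = b F}"
  proof -
    have "\<forall>F. \<exists>ab. F facet_of P \<longrightarrow> (fst ab \<in> v ` {1..N} \<and> P \<subseteq> {x. fst ab \<bullet> x \<le> snd ab} \<and> F = P \<inter> {x. fst ab \<bullet> x = snd ab})"
    proof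
      fix F
      show "\<exists>ab. F facet_of P \<longrightarrow> (fst ab \<in> v ` {1..N} \<and> P \<subseteq> {x. fst ab \<bullet> x \<le> snd ab} \<and> F = P \<inter> {x. fst ab \<bullet> x = snd ab})"
      proof (cases "F facet_of P")
        case True
        then obtain i b where "i \<in> {1..N}" "P \<subseteq> {x. v i \<bullet> x \<le> b}" "F = P \<inter> {x. v i \<bullet> x = b}"
          using fac by blast
        then show ?thesis by (intro exI[of _ "(v i, b)"]) auto
      qed auto
    qed
    then obtain g where "\<And>F. F facet_of P \<Longrightarrow> (fst (g F) \<in> v ` {1..N} \<and> P \<subseteq> {x. fst (g F) \<bullet> x \<le> snd (g F)} \<and> F = P \<inter> {x. fst (g F) \<bullet> x = snd (g F)})"
      by metis
    then show ?thesis using that[of "\<lambda>F. fst (g F)" "\<lambda>F. snd (g F)"] by blast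
  qed
  have aunit: "norm (a F) = 1" if "F facet_of P" for F
    using ab[OF that] unit by auto
  define \<Phi> where "\<Phi> = (\<lambda>F. (a F, b F)) ` ?Fs"
  have "P = {x. \<forall>p\<in>\<Phi>. fst p \<bullet> x \<le> snd p}"
  proof
    show "P \<subseteq> {x. \<forall>p\<in>\<Phi>. fst p \<bullet> x \<le> snd p}" unfolding \<Phi>_def using ab by fastforce
  next
    show "{x. \<forall>p\<in>\<Phi>. fst p \<bullet> x \<le> snd p} \<subseteq> P"
    proof
      fix z assume z: "z \<in> {x. \<forall>p\<in>\<Phi>. fst p \<bullet> x \<le> snd p}"
      then have zF: "a F \<bullet> z \<le> b F" if "F facet_of P" for F
        using that unfolding \<Phi>_def by auto
      show "z \<in> P"
      proof (rule ccontr)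
        assume zP: "z \<notin> P"
        obtain p0 where p0: "p0 \<in> interior P" using intP by blast
        then have p0P: "p0 \<in> P" using interior_subset by blast
        have "closed_segment p0 z \<inter> frontier P \<noteq> {}"
          by (rule connected_Int_frontier) (use p0P zP in \<open>auto intro: convex_connected\<close>)
        then obtain y where y: "y \<in> closed_segment p0 z" "y \<in> frontier P" by blast
        then have yP: "y \<in> P" "y \<notin> interior P" using clP by (auto simp: frontier_def)
        have "rel_interior P = interior P" using intP by (rule rel_interior_nonempty_interior)
        then have "y \<in> \<Union>{F. F facet_of P}" using rel_boundary_of_polyhedron[OF phd] yP by blast
        then obtain F where F: "F facet_of P" "y \<in> F" by blast
        have yeq: "a F \<bullet> y = b F" using ab[OF F(1)] F(2) by blast
        obtain s where s: "0 \<le> s" "s \<le> 1" "y = (1 - s) *\<^sub>R p0 + s *\<^sub>R z"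
          using y(1) unfolding closed_segment_def by blast
        have "s \<noteq> 1" using s yP zP by auto
        then have s1: "s < 1" using s by simp
        obtain e where e: "e > 0" "ball p0 e \<subseteq> P" using p0 open_interior
          by (meson interior_subset mem_interior subset_trans)
        have "p0 + (e/2) *\<^sub>R a F \<in> ball p0 e" using e aunit[OF F(1)] by (simp add: dist_norm)
        then have "p0 + (e/2) *\<^sub>R a F \<in> P" using e by blast
        then have "a F \<bullet> (p0 + (e/2) *\<^sub>R a F) \<le> b F" using ab[OF F(1)] by blast
        moreover have "a F \<bullet> a F = 1" using aunit[OF F(1)] by (simp add: norm_eq_1)
        ultimately have p0lt: "a F \<bullet> p0 < b F" using e by (simp add: inner_add_right)
        have "a F \<bullet> y = (1 - s) * (a F \<bullet> p0) + s * (a F \<bullet> z)"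
          using s(3) by (simp add: inner_add_right)
        also have "\<dots> < (1 - s) * b F + s * b F"
        proof -
          have "(1 - s) * (a F \<bullet> p0) < (1 - s) * b F" using s1 p0lt by simp
          moreover have "s * (a F \<bullet> z) \<le> s * b F" using zF[OF F(1)] s(1) by (simp add: mult_left_mono)
          ultimately show ?thesis by linarith
        qed
        finally show False using yeq by (simp add: algebra_simps)
      qed
    qed
  qed
  moreover have "finite \<Phi>" unfolding \<Phi>_def using fFs by simp
  moreover have "fst ` \<Phi> \<subseteq> v ` {1..N}" unfolding \<Phi>_def using ab by auto
  ultimately show ?thesis by blast
qed

lemma cheb:
  fixes \<Phi> :: "('a::euclidean_space \<times> real) set"
  assumes f\<Phi>: "finite \<Phi>" and unit\<Phi>: "\<forall>p\<in>\<Phi>. norm (fst p) = 1"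
    and P: "P = {x. \<forall>p\<in>\<Phi>. fst p \<bullet> x \<le> snd p}" and bP: "bounded P" and neP: "P \<noteq> {}"
  shows "\<exists>x r S. r \<ge> 0 \<and> cball x r \<subseteq> P \<and> S \<subseteq> fst ` \<Phi> \<and> 0 \<in> convex hull S \<and> (\<forall>a\<in>S. \<forall>z\<in>P. a \<bullet> (z - x) \<le> r)"
proof -
  have "\<Phi> \<noteq> {}"
  proof
    assume "\<Phi> = {}"
    then have "P = UNIV" using P by auto
    then show False using bP not_bounded_UNIV by metis
  qed
  then obtain p0 where p0: "p0 \<in> \<Phi>" by blast
  obtain B where B: "\<forall>x\<in>P. norm x \<le> B" using bP bounded_iff by blast
  define C where "C = {z :: 'a \<times> real. 0 \<le> snd z \<and> (\<forall>p\<in>\<Phi>. fst p \<bullet> fst z + snd z \<le> snd p)}"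
  have C_eq: "C = {z. 0 \<le> snd z} \<inter> (\<Inter>p\<in>\<Phi>. {z. fst p \<bullet> fst z + snd z \<le> snd p})"
    unfolding C_def by auto
  have clC: "closed C" unfolding C_eq
    by (intro closed_Int closed_INT ballI closed_Collect_le continuous_intros)
  have CP: "fst z \<in> P" if "z \<in> C" for z
  proof -
    have "\<forall>p\<in>\<Phi>. fst p \<bullet> fst z \<le> snd p" using that unfolding C_def by force
    then show ?thesis using P by simp
  qed
  have "C \<subseteq> cball 0 B \<times> {0..\<bar>snd p0\<bar> + B}"
  proof
    fix z assume zC: "z \<in> C"
    have n1: "norm (fst z) \<le> B" using B CP[OF zC] by blast
    have "fst p0 \<bullet> fst z + snd z \<le> snd p0" using zC p0 unfolding C_def by blast
    moreover have "\<bar>fst p0 \<bullet> fst z\<bar> \<le> norm (fst z)"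
      using Cauchy_Schwarz_ineq2[of "fst p0" "fst z"] unit\<Phi> p0 by simp
    ultimately have "snd z \<le> \<bar>snd p0\<bar> + B" using n1 by linarith
    moreover have "0 \<le> snd z" using zC unfolding C_def by blast
    ultimately show "z \<in> cball 0 B \<times> {0..\<bar>snd p0\<bar> + B}" using n1
      by (cases z) auto
  qed
  moreover have "bounded (cball (0::'a) B \<times> {0..\<bar>snd p0\<bar> + B})"
    by (intro bounded_Times bounded_cball bounded_closed_interval)
  ultimately have bC: "bounded C" using bounded_subset by blast
  have cC: "compact C" using bC clC by (simp add: compact_eq_bounded_closed)
  obtain x0 where "x0 \<in> P" using neP by blast
  then have "(x0, 0) \<in> C" using P unfolding C_def by auto
  then have "C \<noteq> {}" by blast
  then obtain zs where zs: "zs \<in> C" "\<forall>z\<in>C. snd z \<le> snd zs"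
    using continuous_attains_sup[OF cC _ continuous_on_snd[OF continuous_on_id]] by blast
  define xs where "xs = fst zs"
  define rs where "rs = snd zs"
  have rs0: "rs \<ge> 0" and cons: "\<forall>p\<in>\<Phi>. fst p \<bullet> xs + rs \<le> snd p"
    using zs(1) unfolding C_def xs_def rs_def by auto
  define A where "A = {p\<in>\<Phi>. fst p \<bullet> xs + rs = snd p}"
  define S where "S = fst ` A"
  have fS: "finite S" unfolding S_def A_def using f\<Phi> by simp
  have hull0: "0 \<in> convex hull S"
  proof (rule ccontr)
    assume n0: "0 \<notin> convex hull S"
    have "closed (convex hull S)" using fS by (simp add: compact_imp_closed finite_imp_compact_convex_hull)
    then obtain a b where ab: "a \<noteq> 0" "0 < b" "\<forall>x\<in>convex hull S. inner a x > b"
      using separating_hyperplane_closed_0[OF convex_convex_hull _ n0] by blast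
    define y where "y = (- 1 / b) *\<^sub>R a"
    have yS: "fst p \<bullet> y < - 1" if "p \<in> A" for p
    proof -
      have "fst p \<in> convex hull S" using that unfolding S_def by (auto intro: hull_inc)
      then have "a \<bullet> fst p > b" using ab by blast
      then show ?thesis unfolding y_def using ab(2) by (simp add: inner_commute field_simps)
    qed
    have ev: "\<forall>\<^sub>F t in at_right (0::real). \<forall>p\<in>\<Phi>. fst p \<bullet> (xs + t *\<^sub>R y) + (rs + t) \<le> snd p"
    proof (rule eventually_ball_finite[OF f\<Phi>], rule ballI)
      fix p assume p: "p \<in> \<Phi>"
      show "\<forall>\<^sub>F t in at_right 0. fst p \<bullet> (xs + t *\<^sub>R y) + (rs + t) \<le> snd p"
      proof (cases "p \<in> A")
        case True
        show ?thesis using eventually_at_right_less[of 0]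
        proof (rule eventually_mono)
          fix t :: real assume "0 < t"
          have "fst p \<bullet> (xs + t *\<^sub>R y) + (rs + t) = (fst p \<bullet> xs + rs) + t * (fst p \<bullet> y + 1)"
            by (simp add: inner_add_right algebra_simps)
          also have "\<dots> \<le> snd p + 0"
          proof -
            have "t * (fst p \<bullet> y + 1) \<le> 0" using yS[OF True] \<open>0 < t\<close>
              by (simp add: mult_nonneg_nonpos)
            then show ?thesis using True unfolding A_def by simp
          qed
          finally show "fst p \<bullet> (xs + t *\<^sub>R y) + (rs + t) \<le> snd p" by simp
        qed
      next
        case False
        then have lt: "fst p \<bullet> xs + rs < snd p" using cons p unfolding A_def by force
        have "((\<lambda>t. fst p \<bullet> (xs + t *\<^sub>R y) + (rs + t)) \<longlongrightarrow> fst p \<bullet> (xs + 0 *\<^sub>R y) + (rs + 0)) (at_right 0)"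
          by (intro tendsto_intros)
        then have "((\<lambda>t. fst p \<bullet> (xs + t *\<^sub>R y) + (rs + t)) \<longlongrightarrow> fst p \<bullet> xs + rs) (at_right 0)"
          by simp
        from order_tendstoD(2)[OF this lt] show ?thesis by (rule eventually_mono) simp
      qed
    qed
    have "\<forall>\<^sub>F t in at_right (0::real). 0 < t \<and> (\<forall>p\<in>\<Phi>. fst p \<bullet> (xs + t *\<^sub>R y) + (rs + t) \<le> snd p)"
      using ev eventually_at_right_less[of 0] by (simp add: eventually_conj_iff)
    then obtain t where t: "0 < t" "\<forall>p\<in>\<Phi>. fst p \<bullet> (xs + t *\<^sub>R y) + (rs + t) \<le> snd p"
      using eventually_happens' trivial_limit_at_right_real by blast
    then have "(xs + t *\<^sub>R y, rs + t) \<in> C" using rs0 unfolding C_def by auto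
    then have "rs + t \<le> rs" using zs(2) unfolding rs_def by fastforce
    then show False using t by simp
  qed
  have ball: "cball xs rs \<subseteq> P"
  proof
    fix z assume z: "z \<in> cball xs rs"
    have "\<forall>p\<in>\<Phi>. fst p \<bullet> z \<le> snd p"
    proof
      fix p assume p: "p \<in> \<Phi>"
      have "fst p \<bullet> (z - xs) \<le> norm (fst p) * norm (z - xs)" by (rule norm_cauchy_schwarz)
      also have "\<dots> \<le> rs" using z unit\<Phi> p by (simp add: dist_norm norm_minus_commute)
      finally have "fst p \<bullet> z \<le> fst p \<bullet> xs + rs" by (simp add: inner_diff_right)
      then show "fst p \<bullet> z \<le> snd p" using cons p by force
    qed
    then show "z \<in> P" using P by simp
  qed
  have act: "\<forall>a\<in>S. \<forall>z\<in>P. a \<bullet> (z - xs) \<le> rs"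
  proof (intro ballI)
    fix a z assume a: "a \<in> S" and z: "z \<in> P"
    then obtain p where p: "p \<in> A" "a = fst p" unfolding S_def by blast
    then have "a \<bullet> z \<le> snd p" using z P unfolding A_def by auto
    then show "a \<bullet> (z - xs) \<le> rs" using p unfolding A_def by (simp add: inner_diff_right)
  qed
  have "S \<subseteq> fst ` \<Phi>" unfolding S_def A_def by auto
  then show ?thesis using rs0 ball hull0 act by blast
qed

lemma inball:
  fixes v :: "nat \<Rightarrow> 'a::euclidean_space"
  assumes unit: "\<forall>i\<in>{1..N}. norm (v i) = 1"
    and mu: "\<mu> > 0" "\<forall>S. S \<subseteq> v ` {1..N} \<and> 0 \<in> convex hull S \<longrightarrow> (\<forall>d. \<exists>a\<in>S. a \<bullet> d \<ge> \<mu> * norm d)"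
    and PC: "P \<in> polytope_class N v"
  shows "\<exists>c r. cball c r \<subseteq> P \<and> \<mu> * outer_radius P \<le> r"
proof -
  obtain \<Phi> where \<Phi>: "finite \<Phi>" "fst ` \<Phi> \<subseteq> v ` {1..N}" "P = {x. \<forall>p\<in>\<Phi>. fst p \<bullet> x \<le> snd p}"
    using polytope_repr[OF PC unit] by blast
  have poly: "polytope P" and intP: "interior P \<noteq> {}" using PC unfolding polytope_class_def by auto
  have bP: "bounded P" using poly by (rule polytope_imp_bounded)
  have neP: "P \<noteq> {}" using intP interior_subset by blast
  have u\<Phi>: "\<forall>p\<in>\<Phi>. norm (fst p) = 1" using \<Phi>(2) unit by fastforce
  obtain x r S where xr: "r \<ge> 0" "cball x r \<subseteq> P" "S \<subseteq> fst ` \<Phi>" "0 \<in> convex hull S"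
      "\<forall>a\<in>S. \<forall>z\<in>P. a \<bullet> (z - x) \<le> r"
    using cheb[OF \<Phi>(1) u\<Phi> \<Phi>(3) bP neP] by blast
  have SV: "S \<subseteq> v ` {1..N}" using xr(3) \<Phi>(2) by blast
  have Pin: "P \<subseteq> cball x (r / \<mu>)"
  proof
    fix z assume z: "z \<in> P"
    obtain a where a: "a \<in> S" "a \<bullet> (z - x) \<ge> \<mu> * norm (z - x)" using mu(2) SV xr(4) by blast
    then have "\<mu> * norm (z - x) \<le> r" using xr(5) z by fastforce
    then have "norm (z - x) \<le> r / \<mu>" using mu(1) by (simp add: field_simps)
    then show "z \<in> cball x (r / \<mu>)" by (simp add: dist_norm norm_minus_commute)
  qed
  have "outer_radius P \<le> r / \<mu>" unfolding outer_radius_def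
  proof (rule cInf_lower)
    show "r / \<mu> \<in> {r. \<exists>c. P \<subseteq> cball c r}" using Pin by blast
    show "bdd_below {r. \<exists>c. P \<subseteq> cball c r}"
    proof (rule bdd_belowI[of _ 0])
      fix r' assume "r' \<in> {r. \<exists>c. P \<subseteq> cball c r}"
      then obtain c where "P \<subseteq> cball c r'" by blast
      then have "cball c r' \<noteq> {}" using neP by blast
      then show "0 \<le> r'" by simp
    qed
  qed
  then have "\<mu> * outer_radius P \<le> r" using mu(1) by (simp add: field_simps)
  then show ?thesis using xr(2) by blast
qed

lemma chord_ge1:
  fixes P :: "'a::euclidean_space set"
  assumes cP: "compact P" and cb: "cball c r \<subseteq> P" and u: "norm u = 1"
    and xr: "norm (x - c - ((x - c) \<bullet> u) *\<^sub>R u) + 1 \<le> r"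
  shows "1 \<le> chord_length P x u"
proof -
  define t0 where "t0 = (c - x) \<bullet> u"
  define L where "L = {t::real. x + t *\<^sub>R u \<in> P}"
  have uu: "u \<bullet> u = 1" using u by (simp add: norm_eq_1)
  have sub: "{t0 - 1/2 .. t0 + 1/2} \<subseteq> L"
  proof
    fix t assume t: "t \<in> {t0 - 1/2 .. t0 + 1/2}"
    have eq: "x + t *\<^sub>R u - c = (x - c - ((x - c) \<bullet> u) *\<^sub>R u) + (t - t0) *\<^sub>R u"
      unfolding t0_def by (simp add: algebra_simps inner_diff_left)
    have "norm (x + t *\<^sub>R u - c) \<le> norm (x - c - ((x - c) \<bullet> u) *\<^sub>R u) + norm ((t - t0) *\<^sub>R u)"
      unfolding eq by (rule norm_triangle_ineq)
    also have "norm ((t - t0) *\<^sub>R u) = \<bar>t - t0\<bar>" using u by simp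
    also have "\<bar>t - t0\<bar> \<le> 1/2" using t unfolding atLeastAtMost_iff abs_le_iff by linarith
    finally have "norm (x + t *\<^sub>R u - c) \<le> r" using xr by linarith
    then have "x + t *\<^sub>R u \<in> cball c r" by (simp add: dist_norm norm_minus_commute)
    then show "t \<in> L" using cb unfolding L_def by blast
  qed
  have "L = (\<lambda>t. x + t *\<^sub>R u) -` P" by (auto simp: L_def)
  moreover have "closed ((\<lambda>t. x + t *\<^sub>R u) -` P)"
    by (rule continuous_closed_vimage[OF compact_imp_closed[OF cP]]) (intro continuous_intros)
  ultimately have clL: "closed L" by simp
  obtain B where B: "\<forall>y\<in>P. norm y \<le> B" using compact_imp_bounded[OF cP] bounded_iff by blast
  have "bounded L"
    unfolding bounded_iff
  proof (intro exI ballI)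
    fix t assume "t \<in> L"
    then have "norm (x + t *\<^sub>R u) \<le> B" using B unfolding L_def by blast
    moreover have "norm (t *\<^sub>R u) \<le> norm (x + t *\<^sub>R u) + norm x"
      using norm_triangle_ineq4[of "x + t *\<^sub>R u" x] by simp
    ultimately show "norm t \<le> B + norm x" using u by simp
  qed
  then have "compact L" using clL by (simp add: compact_eq_bounded_closed)
  then have "measure lborel {t0 - 1/2 .. t0 + 1/2} \<le> measure lborel L"
    by (intro measure_mono_fmeasurable[OF sub] fmeasurable_compact) auto
  then show ?thesis unfolding chord_length_def L_def[symmetric] by simp
qed

lemma emeasure_half_ball:
  "emeasure lborel (ball (a::'a::euclidean_space) (1/2)) = ennreal (measure lborel (ball (0::'a) (1/2)))"
proof -
  have "emeasure lborel (ball a (1/2)) = ennreal (measure lborel (ball a (1/2)))"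
    using emeasure_lborel_ball_finite[of a "1/2"] by (intro emeasure_eq_ennreal_measure) auto
  also have "measure lborel (ball a (1/2)) = measure lborel (ball (0::'a) (1/2))"
    using content_ball_conv_unit_ball[of "1/2" a] content_ball_conv_unit_ball[of "1/2" "0::'a"] by simp
  finally show ?thesis .
qed

lemma inner_lb:
  fixes P :: "'a::euclidean_space set"
  assumes dim2: "DIM('a) \<ge> 2" and cP: "compact P" and cb: "cball c r \<subseteq> P"
    and mr: "real m + 1 \<le> r" and q: "q \<ge> 0" and w: "w \<noteq> 0"
  shows "ennreal (real m * measure lborel (ball (0::'a) (1/2))) \<le>
    (\<integral>\<^sup>+ x. indicator {x. 0 \<le> x \<bullet> sgn w \<and> x \<bullet> sgn w \<le> 1} x *
                ennreal (chord_length P x (sgn w) powr q) \<partial>lborel)"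
proof -
  define u where "u = sgn w"
  have u1: "norm u = 1" using w by (simp add: u_def norm_sgn)
  have uu: "u \<bullet> u = 1" using u1 by (simp add: norm_eq_1)
  have "dim (span {u}) \<le> 1" using dim_le_card'[of "{u}"] by (simp add: dim_span)
  have "span {u} \<noteq> UNIV"
  proof
    assume "span {u} = UNIV"
    then have "dim (span {u}) = DIM('a)" by simp
    then show False using dim2 \<open>dim (span {u}) \<le> 1\<close> by linarith
  qed
  then obtain a :: 'a where a: "a \<noteq> 0" "\<forall>x\<in>span {u}. a \<bullet> x = 0"
    using span_not_UNIV_orthogonal by blast
  define e where "e = sgn a"
  have e1: "norm e = 1" using a by (simp add: e_def norm_sgn)
  have eu: "e \<bullet> u = 0" using a by (simp add: e_def sgn_div_norm span_base)
  define c0 where "c0 = c - (c \<bullet> u - 1/2) *\<^sub>R u"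
  have c0u: "c0 \<bullet> u = 1/2" unfolding c0_def using uu by (simp add: inner_diff_left)
  define Bj where "Bj j = ball (c0 + real j *\<^sub>R e) (1/2)" for j :: nat
  define U where "U = (\<Union>j<m. Bj j)"
  have key: "indicator U x \<le> indicator {x. 0 \<le> x \<bullet> u \<and> x \<bullet> u \<le> 1} x *
                ennreal (chord_length P x u powr q)" for x
  proof (cases "x \<in> U")
    case False then show ?thesis by simp
  next
    case True
    then obtain j where j: "j < m" "x \<in> Bj j" unfolding U_def by blast
    define \<delta> where "\<delta> = x - (c0 + real j *\<^sub>R e)"
    have nd: "norm \<delta> < 1/2" using j(2) unfolding Bj_def \<delta>_def by (simp add: dist_norm norm_minus_commute)
    have du: "\<bar>\<delta> \<bullet> u\<bar> \<le> norm \<delta>" using Cauchy_Schwarz_ineq2[of \<delta> u] u1 by simp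
    have xu: "x \<bullet> u = 1/2 + \<delta> \<bullet> u"
      unfolding \<delta>_def using c0u eu by (simp add: inner_diff_left inner_add_left)
    have slab: "0 \<le> x \<bullet> u \<and> x \<bullet> u \<le> 1" using xu du nd by linarith
    have xc: "x - c = \<delta> + real j *\<^sub>R e - (c \<bullet> u - 1/2) *\<^sub>R u"
      unfolding \<delta>_def c0_def by (simp add: algebra_simps)
    have xcu: "(x - c) \<bullet> u = \<delta> \<bullet> u - (c \<bullet> u - 1/2)"
    proof -
      have "(x - c) \<bullet> u = \<delta> \<bullet> u + real j * (e \<bullet> u) - (c \<bullet> u - 1/2) * (u \<bullet> u)"
        unfolding xc by (simp only: inner_diff_left inner_add_left inner_scaleR_left)
      then show ?thesis using eu uu by simp
    qed
    have weq: "x - c - ((x - c) \<bullet> u) *\<^sub>R u = \<delta> + real j *\<^sub>R e - (\<delta> \<bullet> u) *\<^sub>R u"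
    proof -
      have aux: "(A::'a) - a *\<^sub>R u - (b - a) *\<^sub>R u = A - b *\<^sub>R u" for A a b
        by (simp add: algebra_simps)
      show ?thesis unfolding xcu unfolding xc by (rule aux)
    qed
    have "norm (\<delta> + real j *\<^sub>R e - (\<delta> \<bullet> u) *\<^sub>R u) \<le> norm \<delta> + norm (real j *\<^sub>R e) + norm ((\<delta> \<bullet> u) *\<^sub>R u)"
      using norm_triangle_ineq4[of "\<delta> + real j *\<^sub>R e" "(\<delta> \<bullet> u) *\<^sub>R u"] norm_triangle_ineq[of \<delta> "real j *\<^sub>R e"] by linarith
    also have "\<dots> = norm \<delta> + real j + \<bar>\<delta> \<bullet> u\<bar>" using e1 u1 by simp
    finally have "norm (x - c - ((x - c) \<bullet> u) *\<^sub>R u) + 1 \<le> r"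
      unfolding weq using nd du j(1) mr by linarith
    then have "1 \<le> chord_length P x u" by (rule chord_ge1[OF cP cb u1])
    then have "1 \<le> chord_length P x u powr q" using q by (rule ge_one_powr_ge_zero)
    then show ?thesis using slab True by simp
  qed
  have disj: "disjoint_family_on Bj {..<m}"
    unfolding disjoint_family_on_def
  proof (intro ballI impI)
    fix i j assume ij: "i \<in> {..<m}" "j \<in> {..<m}" "i \<noteq> j"
    show "Bj i \<inter> Bj j = {}"
    proof (rule ccontr)
      assume "Bj i \<inter> Bj j \<noteq> {}"
      then obtain y where y: "y \<in> Bj i" "y \<in> Bj j" by blast
      have "dist (c0 + real i *\<^sub>R e) y < 1/2" "dist y (c0 + real j *\<^sub>R e) < 1/2"
        using y unfolding Bj_def by (auto simp: dist_commute)
      then have "dist (c0 + real i *\<^sub>R e) (c0 + real j *\<^sub>R e) < 1"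
        using dist_triangle[of "c0 + real i *\<^sub>R e" "c0 + real j *\<^sub>R e" y] by linarith
      moreover have "dist (c0 + real i *\<^sub>R e) (c0 + real j *\<^sub>R e) = \<bar>real i - real j\<bar>"
        using e1 by (simp add: dist_norm scaleR_diff_left[symmetric])
      moreover have "\<bar>real i - real j\<bar> \<ge> 1" using ij(3) by linarith
      ultimately show False by linarith
    qed
  qed
  have "ennreal (real m * measure lborel (ball (0::'a) (1/2))) = (\<Sum>j<m. emeasure lborel (Bj j))"
    unfolding Bj_def emeasure_half_ball by (simp add: ennreal_of_nat_eq_real_of_nat ennreal_mult)
  also have "\<dots> = emeasure lborel U"
    unfolding U_def by (rule sum_emeasure) (use disj in \<open>auto simp: Bj_def[abs_def]\<close>)
  also have "\<dots> = (\<integral>\<^sup>+ x. indicator U x \<partial>lborel)"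
    by (simp add: U_def Bj_def)
  also have "\<dots> \<le> (\<integral>\<^sup>+ x. indicator {x. 0 \<le> x \<bullet> u \<and> x \<bullet> u \<le> 1} x *
                ennreal (chord_length P x u powr q) \<partial>lborel)"
    by (rule nn_integral_mono) (rule key)
  finally show ?thesis unfolding u_def .
qed

lemma chord_integral_lb:
  fixes P :: "'a::euclidean_space set"
  assumes dim2: "DIM('a) \<ge> 2" and cP: "compact P" and cb: "cball c r \<subseteq> P"
    and mr: "real m + 1 \<le> r" and q: "q \<ge> 0"
  shows "ennreal (real m * measure lborel (ball (0::'a) (1/2)) * measure lborel (ball (0::'a) 1)) \<le> chord_integral q P"
proof -
  define \<beta> where "\<beta> = measure lborel (ball (0::'a) (1/2))"
  define \<gamma> where "\<gamma> = measure lborel (ball (0::'a) 1)"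
  have b0: "\<beta> \<ge> 0" "\<gamma> \<ge> 0" unfolding \<beta>_def \<gamma>_def by auto
  have pt: "ennreal (real m * \<beta>) * indicator (ball 0 1 - {0}) w \<le>
      indicator (ball 0 1) w *
        (\<integral>\<^sup>+ x. indicator {x. 0 \<le> x \<bullet> sgn w \<and> x \<bullet> sgn w \<le> 1} x *
                ennreal (chord_length P x (sgn w) powr q) \<partial>lborel)" for w :: 'a
  proof (cases "w \<in> ball 0 1 - {0}")
    case True
    then have "w \<noteq> 0" by auto
    from inner_lb[OF dim2 cP cb mr q this] show ?thesis using True unfolding \<beta>_def by simp
  next
    case False then show ?thesis by simp
  qed
  have "emeasure lborel (ball (0::'a) 1 - {0}) = emeasure lborel (ball (0::'a) 1)"
    by (rule emeasure_Diff_null_set) (auto intro: finite_imp_null_set_lborel)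
  also have "\<dots> = ennreal \<gamma>" unfolding \<gamma>_def
    using emeasure_lborel_ball_finite[of "0::'a" 1] by (intro emeasure_eq_ennreal_measure) auto
  finally have eg: "emeasure lborel (ball (0::'a) 1 - {0}) = ennreal \<gamma>" .
  have "ennreal (real m * \<beta> * \<gamma>) = ennreal (real m * \<beta>) * emeasure lborel (ball (0::'a) 1 - {0})"
    unfolding eg using b0 by (simp add: ennreal_mult)
  also have "\<dots> = (\<integral>\<^sup>+ w. ennreal (real m * \<beta>) * indicator (ball 0 1 - {0}) (w::'a) \<partial>lborel)"
    using nn_integral_cmult_indicator[of "ball (0::'a) 1 - {0}" lborel "ennreal (real m * \<beta>)"] by simp
  also have "\<dots> \<le> chord_integral q P" unfolding chord_integral_def
    by (rule nn_integral_mono) (rule pt)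
  finally show ?thesis unfolding \<beta>_def \<gamma>_def .
qed

theorem corollary3p5:
  fixes v :: "nat \<Rightarrow> 'a::euclidean_space"
    and N :: nat
    and P :: "nat \<Rightarrow> 'a set"
    and q :: real
  assumes "DIM('a) \<ge> 2"
    and "\<forall>i\<in>{1..N}. norm (v i) = 1"
    and "not_in_closed_hemisphere N v"
    and "general_position N v"
    and "\<forall>k. P k \<in> polytope_class N v"
    and "\<not> (\<exists>B. \<forall>k. outer_radius (P k) \<le> B)"
    and "q \<ge> 0"
  shows "\<not> (\<exists>B::real. \<forall>k. chord_integral q (P k) \<le> ennreal B)"
proof
  assume "\<exists>B::real. \<forall>k. chord_integral q (P k) \<le> ennreal B"
  then obtain B :: real where B: "\<forall>k. chord_integral q (P k) \<le> ennreal B" by blast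
  obtain \<mu> where mu: "\<mu> > 0" "\<forall>S. S \<subseteq> v ` {1..N} \<and> 0 \<in> convex hull S \<longrightarrow> (\<forall>d. \<exists>a\<in>S. a \<bullet> d \<ge> \<mu> * norm d)"
    using uniform_mu[OF assms(3,4)] by blast
  define \<beta> where "\<beta> = measure lborel (ball (0::'a) (1/2))"
  define \<gamma> where "\<gamma> = measure lborel (ball (0::'a) 1)"
  have bg: "\<beta> > 0" "\<gamma> > 0" unfolding \<beta>_def \<gamma>_def by (auto intro: content_ball_pos)
  obtain m :: nat where m: "\<bar>B\<bar> / (\<beta> * \<gamma>) < real m" using reals_Archimedean2 by blast
  then have mB: "\<bar>B\<bar> < real m * \<beta> * \<gamma>" using bg by (simp add: field_simps)
  obtain k where k: "outer_radius (P k) > (real m + 1) / \<mu>"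
    using assms(6) by (meson not_le)
  obtain c r where cr: "cball c r \<subseteq> P k" "\<mu> * outer_radius (P k) \<le> r"
    using inball[OF assms(2) mu assms(5)[rule_format, of k]] by blast
  have "real m + 1 < \<mu> * outer_radius (P k)" using k mu(1) by (simp add: field_simps)
  then have mr: "real m + 1 \<le> r" using cr by linarith
  have cP: "compact (P k)" using assms(5) unfolding polytope_class_def by (auto intro: polytope_imp_compact)
  have "ennreal (real m * \<beta> * \<gamma>) \<le> chord_integral q (P k)"
    unfolding \<beta>_def \<gamma>_def by (rule chord_integral_lb[OF assms(1) cP cr(1) mr assms(7)])
  also have "\<dots> \<le> ennreal B" using B by blast
  also have "\<dots> \<le> ennreal \<bar>B\<bar>" by (rule ennreal_leI) simp
  finally have "real m * \<beta> * \<gamma> \<le> \<bar>B\<bar>" by (simp add: ennreal_le_iff)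
  then show False using mB by linarith
qed

end
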